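(* Let $(X,Y,\phi)$ be an $L$-context and $X'\subseteq X$, $Y'\subseteq Y$, and let $S_1,S_2\colon\mathcal{K}\phi\to\mathcal{K}\phi_{X',Y'}$ and $F_1,F_2\colon\mathcal{K}\phi_{X',Y'}\to\mathcal{K}\phi$ be the maps $S_1\mu=(\phi_{X',Y'})^\forall(\phi_{X',Y'})^\exists\mu_{X'}$, $S_2\mu=\big((\phi_{X,Y'})^\forall(\phi_{X,Y'})^\exists\mu\big)_{X'}$, $F_1\mu'=\phi^\forall\phi^\exists\underline{\mu'}$, $F_2\mu'=(\phi_{X,Y'})^\forall(\phi_{X,Y'})^\exists\underline{\mu'}$. Then: (1) $(F_1\mu')_{X'}=(F_2\mu')_{X'}$ for all $\mu'\in\mathcal{K}\phi_{X',Y'}$; (2) each of the composites $S_1F_1$, $S_1F_2$, $S_2F_1$, $S_2F_2$ equals the identity map of $\mathcal{K}\phi_{X',Y'}$.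
   Context: $L=(L,* )$ is a complete residuated lattice: a complete lattice with bottom $0$ and top $1$, equipped with a commutative associative operation $*$ with unit $1$ satisfying $a*\bigvee_i b_i=\bigvee_i a*b_i$; $\to$ is its residuum ($a*b\le c\iff a\le b\to c$). An $L$-context is a triple $(X,Y,\phi)$ with $X,Y$ sets and $\phi\colon X\times Y\to L$. $L^X$ is the set of maps $X\to L$ with $L$-order $L^X(\mu,\mu')=\bigwedge_{x}(\mu(x)\to\mu'(x))$. $(\phi^\exists\mu)(y)=\bigvee_{x\in X}\mu(x)*\phi(x,y)$ for $\mu\in L^X$, and $(\phi^\forall\lambda)(x)=\bigwedge_{y\in Y}(\phi(x,y)\to\lambda(y))$ for $\lambda\in L^Y$. $\mathcal{K}\phi=\{\mu\in L^X\mid\phi^\forall\phi^\exists\mu=\mu\}$. For $X'\subseteq X$, $Y'\subseteq Y$, $\phi_{X',Y'}$ is the restriction of $\phi$ to $X'\times Y'$ (an $L$-context $(X',Y',\phi_{X',Y'})$); $\mu_{X'}$ is the restriction of $\mu\in L^X$ to $X'$; for $\mu'\in L^{X'}$, $\underline{\mu'}\in L^X$ is the extension of $\mu'$ by $0$ outside $X'$. (The maps $S_i,F_i$ are well defined with the stated domains and codomains.) *)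

theory Defs
  imports Main
begin

definition complete_residuated_lattice ::
  "('l::complete_lattice \<Rightarrow> 'l \<Rightarrow> 'l) \<Rightarrow> ('l \<Rightarrow> 'l \<Rightarrow> 'l) \<Rightarrow> bool" where
  "complete_residuated_lattice mul res \<longleftrightarrow>
     (\<forall>a b. mul a b = mul b a) \<and>
     (\<forall>a b c. mul (mul a b) c = mul a (mul b c)) \<and>
     (\<forall>a. mul a top = a) \<and>
     (\<forall>a B. mul a (Sup B) = Sup (mul a ` B)) \<and>
     (\<forall>a b c. mul a b \<le> c \<longleftrightarrow> a \<le> res b c)"

text \<open>Elements of L^X are represented as functions that are 0 (bot) outside X.\<close>
definition Lset :: "'x set \<Rightarrow> ('x \<Rightarrow> 'l::complete_lattice) set" where
  "Lset X = {\<mu>. \<forall>x. x \<notin> X \<longrightarrow> \<mu> x = bot}"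

definition restr :: "'x set \<Rightarrow> ('x \<Rightarrow> 'l::complete_lattice) \<Rightarrow> ('x \<Rightarrow> 'l)" where
  "restr X' \<mu> = (\<lambda>x. if x \<in> X' then \<mu> x else bot)"

definition ext0 :: "'x set \<Rightarrow> ('x \<Rightarrow> 'l::complete_lattice) \<Rightarrow> ('x \<Rightarrow> 'l)" where
  "ext0 X' \<mu>' = (\<lambda>x. if x \<in> X' then \<mu>' x else bot)"

text \<open>phi^exists for the context (X, Y, phi restricted to X \<times> Y).\<close>
definition up_ex ::
  "('l::complete_lattice \<Rightarrow> 'l \<Rightarrow> 'l) \<Rightarrow> 'x set \<Rightarrow> 'y set \<Rightarrow> ('x \<Rightarrow> 'y \<Rightarrow> 'l)
     \<Rightarrow> ('x \<Rightarrow> 'l) \<Rightarrow> ('y \<Rightarrow> 'l)" where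
  "up_ex mul X Y \<phi> \<mu> = (\<lambda>y. if y \<in> Y then (SUP x\<in>X. mul (\<mu> x) (\<phi> x y)) else bot)"

definition down_all ::
  "('l::complete_lattice \<Rightarrow> 'l \<Rightarrow> 'l) \<Rightarrow> 'x set \<Rightarrow> 'y set \<Rightarrow> ('x \<Rightarrow> 'y \<Rightarrow> 'l)
     \<Rightarrow> ('y \<Rightarrow> 'l) \<Rightarrow> ('x \<Rightarrow> 'l)" where
  "down_all res X Y \<phi> lam = (\<lambda>x. if x \<in> X then (INF y\<in>Y. res (\<phi> x y) (lam y)) else bot)"

definition clo ::
  "('l::complete_lattice \<Rightarrow> 'l \<Rightarrow> 'l) \<Rightarrow> ('l \<Rightarrow> 'l \<Rightarrow> 'l) \<Rightarrow> 'x set \<Rightarrow> 'y set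
     \<Rightarrow> ('x \<Rightarrow> 'y \<Rightarrow> 'l) \<Rightarrow> ('x \<Rightarrow> 'l) \<Rightarrow> ('x \<Rightarrow> 'l)" where
  "clo mul res X Y \<phi> \<mu> = down_all res X Y \<phi> (up_ex mul X Y \<phi> \<mu>)"

text \<open>K phi for the context (X, Y, phi restricted to X \<times> Y).\<close>
definition Kset ::
  "('l::complete_lattice \<Rightarrow> 'l \<Rightarrow> 'l) \<Rightarrow> ('l \<Rightarrow> 'l \<Rightarrow> 'l) \<Rightarrow> 'x set \<Rightarrow> 'y set
     \<Rightarrow> ('x \<Rightarrow> 'y \<Rightarrow> 'l) \<Rightarrow> ('x \<Rightarrow> 'l) set" where
  "Kset mul res X Y \<phi> = {\<mu> \<in> Lset X. clo mul res X Y \<phi> \<mu> = \<mu>}"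

definition S1 where "S1 mul res X Y X' Y' \<phi> \<mu> = clo mul res X' Y' \<phi> (restr X' \<mu>)"
definition S2 where "S2 mul res X Y X' Y' \<phi> \<mu> = restr X' (clo mul res X Y' \<phi> \<mu>)"
definition F1 where "F1 mul res X Y X' Y' \<phi> \<mu>' = clo mul res X Y \<phi> (ext0 X' \<mu>')"
definition F2 where "F2 mul res X Y X' Y' \<phi> \<mu>' = clo mul res X Y' \<phi> (ext0 X' \<mu>')"

end

theory Submission
  imports Defs
begin

lemma crl_comm: "complete_residuated_lattice mul res \<Longrightarrow> mul a b = mul b a"
  unfolding complete_residuated_lattice_def by blast
lemma crl_res: "complete_residuated_lattice mul res \<Longrightarrow> mul a b \<le> c \<longleftrightarrow> a \<le> res b c"
  unfolding complete_residuated_lattice_def by blast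
lemma crl_sup: "complete_residuated_lattice mul res \<Longrightarrow> mul a (Sup B) = Sup (mul a ` B)"
  unfolding complete_residuated_lattice_def by blast

lemma crl_bot: "complete_residuated_lattice mul res \<Longrightarrow> mul bot b = bot"
proof -
  assume c: "complete_residuated_lattice mul res"
  have "mul b (Sup {}) = Sup (mul b ` {})" using crl_sup[OF c] by blast
  then show ?thesis using crl_comm[OF c] by simp
qed

lemma crl_mono: "complete_residuated_lattice mul res \<Longrightarrow> a \<le> b \<Longrightarrow> mul a c \<le> mul b c"
proof -
  assume c: "complete_residuated_lattice mul res" and ab: "a \<le> b"
  have "mul c (Sup {a,b}) = Sup (mul c ` {a,b})" using crl_sup[OF c] by blast
  then have "mul c b = sup (mul c a) (mul c b)" using ab by (simp add: sup_absorb2)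
  then have "mul c a \<le> mul c b" by (metis sup.cobounded1)
  then show ?thesis using crl_comm[OF c] by metis
qed

lemma res_mono: "complete_residuated_lattice mul res \<Longrightarrow> c \<le> d \<Longrightarrow> res b c \<le> res b d"
proof -
  assume c: "complete_residuated_lattice mul res" and cd: "c \<le> d"
  have "mul (res b c) b \<le> c" using crl_res[OF c] by blast
  then have "mul (res b c) b \<le> d" using cd by simp
  then show ?thesis using crl_res[OF c] by blast
qed

lemma clo_ext:
  assumes c: "complete_residuated_lattice mul res" and x: "x \<in> X"
  shows "\<mu> x \<le> clo mul res X Y \<phi> \<mu> x"
proof -
  have "\<mu> x \<le> (INF y\<in>Y. res (\<phi> x y) (if y \<in> Y then SUP x\<in>X. mul (\<mu> x) (\<phi> x y) else bot))"
  proof (rule INF_greatest)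
  fix y assume "y \<in> Y"
  have "mul (\<mu> x) (\<phi> x y) \<le> (SUP x\<in>X. mul (\<mu> x) (\<phi> x y))" using x by (rule SUP_upper)
  then show "\<mu> x \<le> res (\<phi> x y) (if y \<in> Y then SUP x\<in>X. mul (\<mu> x) (\<phi> x y) else bot)"
    using \<open>y \<in> Y\<close> crl_res[OF c] by simp
  qed
  then show ?thesis using x unfolding clo_def down_all_def up_ex_def by simp
qed

lemma clo_mono:
  assumes c: "complete_residuated_lattice mul res" and le: "\<And>x. x \<in> X \<Longrightarrow> \<mu> x \<le> \<nu> x"
  shows "clo mul res X Y \<phi> \<mu> z \<le> clo mul res X Y \<phi> \<nu> z"
  unfolding clo_def down_all_def up_ex_def
proof (clarsimp, intro INF_mono bexI)
  fix y assume "y \<in> Y"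
  show "res (\<phi> z y) (SUP x\<in>X. mul (\<mu> x) (\<phi> x y)) \<le> res (\<phi> z y) (SUP x\<in>X. mul (\<nu> x) (\<phi> x y))"
    by (rule res_mono[OF c], rule SUP_mono, use le crl_mono[OF c] in blast)
qed

lemma up_ex_clo:
  assumes c: "complete_residuated_lattice mul res"
  shows "up_ex mul X Y \<phi> (clo mul res X Y \<phi> \<mu>) = up_ex mul X Y \<phi> \<mu>"
proof
  fix y
  show "up_ex mul X Y \<phi> (clo mul res X Y \<phi> \<mu>) y = up_ex mul X Y \<phi> \<mu> y"
  proof (cases "y \<in> Y")
    case False then show ?thesis by (simp add: up_ex_def)
  next
    case True
    have "(SUP x\<in>X. mul (clo mul res X Y \<phi> \<mu> x) (\<phi> x y)) \<le> (SUP x\<in>X. mul (\<mu> x) (\<phi> x y))"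
    proof (rule SUP_least)
      fix x assume x: "x \<in> X"
      have "clo mul res X Y \<phi> \<mu> x \<le> res (\<phi> x y) (up_ex mul X Y \<phi> \<mu> y)"
      proof -
        have "clo mul res X Y \<phi> \<mu> x = (INF y\<in>Y. res (\<phi> x y) (up_ex mul X Y \<phi> \<mu> y))"
          using x unfolding clo_def down_all_def by (simp only: if_True)
        also have "\<dots> \<le> res (\<phi> x y) (up_ex mul X Y \<phi> \<mu> y)" by (rule INF_lower[OF True])
        finally show ?thesis .
      qed
      then have "mul (clo mul res X Y \<phi> \<mu> x) (\<phi> x y) \<le> up_ex mul X Y \<phi> \<mu> y"
        using crl_res[OF c] by blast
      then show "mul (clo mul res X Y \<phi> \<mu> x) (\<phi> x y) \<le> (SUP x\<in>X. mul (\<mu> x) (\<phi> x y))"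
        using True by (simp add: up_ex_def)
    qed
    moreover have "(SUP x\<in>X. mul (\<mu> x) (\<phi> x y)) \<le> (SUP x\<in>X. mul (clo mul res X Y \<phi> \<mu> x) (\<phi> x y))"
    proof (rule SUP_mono)
      fix x assume x: "x \<in> X"
      have "mul (\<mu> x) (\<phi> x y) \<le> mul (clo mul res X Y \<phi> \<mu> x) (\<phi> x y)"
        by (rule crl_mono[OF c clo_ext[OF c x]])
      then show "\<exists>m\<in>X. mul (\<mu> x) (\<phi> x y) \<le> mul (clo mul res X Y \<phi> \<mu> m) (\<phi> m y)"
        using x by blast
    qed
    ultimately show ?thesis using True by (simp add: up_ex_def)
  qed
qed

lemma clo_idem:
  assumes c: "complete_residuated_lattice mul res"
  shows "clo mul res X Y \<phi> (clo mul res X Y \<phi> \<mu>) = clo mul res X Y \<phi> \<mu>"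
proof -
  have "clo mul res X Y \<phi> (clo mul res X Y \<phi> \<mu>) = down_all res X Y \<phi> (up_ex mul X Y \<phi> (clo mul res X Y \<phi> \<mu>))"
    by (simp only: clo_def)
  also have "\<dots> = clo mul res X Y \<phi> \<mu>" by (simp only: up_ex_clo[OF c]) (simp only: clo_def)
  finally show ?thesis .
qed

lemma up_ex_ext0:
  assumes c: "complete_residuated_lattice mul res" and s: "X' \<subseteq> X"
  shows "up_ex mul X Y \<phi> (ext0 X' \<mu>) = up_ex mul X' Y \<phi> \<mu>"
proof
  fix y
  have eq: "X = X' \<union> (X - X')" using s by blast
  have "(SUP x\<in>X. mul (ext0 X' \<mu> x) (\<phi> x y)) =
        sup (SUP x\<in>X'. mul (ext0 X' \<mu> x) (\<phi> x y)) (SUP x\<in>X - X'. mul (ext0 X' \<mu> x) (\<phi> x y))"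
    by (subst eq, rule SUP_union)
  also have "(SUP x\<in>X - X'. mul (ext0 X' \<mu> x) (\<phi> x y)) = bot"
    by (simp add: ext0_def crl_bot[OF c])
  also have "(SUP x\<in>X'. mul (ext0 X' \<mu> x) (\<phi> x y)) = (SUP x\<in>X'. mul (\<mu> x) (\<phi> x y))"
    by (rule SUP_cong, auto simp: ext0_def)
  finally show "up_ex mul X Y \<phi> (ext0 X' \<mu>) y = up_ex mul X' Y \<phi> \<mu> y"
    by (simp add: up_ex_def)
qed

lemma clo_restr: "clo mul res X Y \<phi> (restr X \<mu>) = clo mul res X Y \<phi> \<mu>"
proof -
  have "up_ex mul X Y \<phi> (restr X \<mu>) = up_ex mul X Y \<phi> \<mu>"
    unfolding up_ex_def restr_def by (auto intro!: SUP_cong)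
  then show ?thesis unfolding clo_def by simp
qed

lemma clo_outside: "x \<notin> X \<Longrightarrow> clo mul res X Y \<phi> \<mu> x = bot"
  unfolding clo_def down_all_def by simp

theorem mainTheorem2:
  fixes mul res :: "'l::complete_lattice \<Rightarrow> 'l \<Rightarrow> 'l"
    and X X' :: "'x set" and Y Y' :: "'y set" and \<phi> :: "'x \<Rightarrow> 'y \<Rightarrow> 'l"
  assumes "complete_residuated_lattice mul res"
    and "X' \<subseteq> X" and "Y' \<subseteq> Y"
  shows "(\<forall>\<mu>'\<in>Kset mul res X' Y' \<phi>.
            restr X' (F1 mul res X Y X' Y' \<phi> \<mu>') = restr X' (F2 mul res X Y X' Y' \<phi> \<mu>'))
       \<and> (\<forall>\<mu>'\<in>Kset mul res X' Y' \<phi>.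
            S1 mul res X Y X' Y' \<phi> (F1 mul res X Y X' Y' \<phi> \<mu>') = \<mu>'
          \<and> S1 mul res X Y X' Y' \<phi> (F2 mul res X Y X' Y' \<phi> \<mu>') = \<mu>'
          \<and> S2 mul res X Y X' Y' \<phi> (F1 mul res X Y X' Y' \<phi> \<mu>') = \<mu>'
          \<and> S2 mul res X Y X' Y' \<phi> (F2 mul res X Y X' Y' \<phi> \<mu>') = \<mu>')"
proof -
  note c = assms(1)
  have main: "restr X' (F1 mul res X Y X' Y' \<phi> \<mu>') = \<mu>' \<and> restr X' (F2 mul res X Y X' Y' \<phi> \<mu>') = \<mu>'
     \<and> S1 mul res X Y X' Y' \<phi> (F1 mul res X Y X' Y' \<phi> \<mu>') = \<mu>'
          \<and> S1 mul res X Y X' Y' \<phi> (F2 mul res X Y X' Y' \<phi> \<mu>') = \<mu>'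
          \<and> S2 mul res X Y X' Y' \<phi> (F1 mul res X Y X' Y' \<phi> \<mu>') = \<mu>'
          \<and> S2 mul res X Y X' Y' \<phi> (F2 mul res X Y X' Y' \<phi> \<mu>') = \<mu>'"
    if K: "\<mu>' \<in> Kset mul res X' Y' \<phi>" for \<mu>'
  proof -
    define f1 where "f1 = F1 mul res X Y X' Y' \<phi> \<mu>'"
    define f2 where "f2 = F2 mul res X Y X' Y' \<phi> \<mu>'"
    have L: "\<And>x. x \<notin> X' \<Longrightarrow> \<mu>' x = bot" and fix': "clo mul res X' Y' \<phi> \<mu>' = \<mu>'"
      using K unfolding Kset_def Lset_def by auto
    have upY: "up_ex mul X Y \<phi> (ext0 X' \<mu>') = up_ex mul X' Y \<phi> \<mu>'"
      and upY': "up_ex mul X Y' \<phi> (ext0 X' \<mu>') = up_ex mul X' Y' \<phi> \<mu>'"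
      using up_ex_ext0[OF c assms(2)] by auto
    have f2X': "f2 x = \<mu>' x" if "x \<in> X'" for x
    proof -
      have "f2 x = clo mul res X' Y' \<phi> \<mu>' x"
        using that assms(2) unfolding f2_def F2_def clo_def upY' down_all_def by auto
      then show ?thesis using fix' by simp
    qed
    have f12: "f1 x \<le> f2 x" for x
    proof (cases "x \<in> X")
      case True
      have "(INF y\<in>Y. res (\<phi> x y) (up_ex mul X Y \<phi> (ext0 X' \<mu>') y))
            \<le> (INF y\<in>Y'. res (\<phi> x y) (up_ex mul X Y' \<phi> (ext0 X' \<mu>') y))"
        by (rule INF_mono, use assms(3) in \<open>auto simp: up_ex_def\<close>)
      then show ?thesis using True unfolding f1_def f2_def F1_def F2_def clo_def down_all_def by simp
    next
      case False then show ?thesis unfolding f1_def f2_def F1_def F2_def by (simp add: clo_outside)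
    qed
    have e1: "ext0 X' \<mu>' x \<le> f1 x" for x
    proof (cases "x \<in> X")
      case True then show ?thesis unfolding f1_def F1_def by (rule clo_ext[OF c])
    next
      case False then show ?thesis using assms(2) by (auto simp: ext0_def)
    qed
    have r2: "restr X' f2 = \<mu>'" using f2X' L by (auto simp: restr_def)
    have r1: "restr X' f1 = \<mu>'"
    proof
      fix x show "restr X' f1 x = \<mu>' x"
      proof (cases "x \<in> X'")
        case True
        have "\<mu>' x \<le> f1 x" using e1[of x] True by (simp add: ext0_def)
        moreover have "f1 x \<le> \<mu>' x" using f12[of x] f2X'[OF True] by simp
        ultimately show ?thesis using True by (simp add: restr_def)
      qed (simp add: restr_def L)
    qed
    have s1: "S1 mul res X Y X' Y' \<phi> f = \<mu>'" if "restr X' f = \<mu>'" for f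
      unfolding S1_def using that fix' by simp
    have cf2: "clo mul res X Y' \<phi> f2 = f2" unfolding f2_def F2_def by (rule clo_idem[OF c])
    have cf1: "clo mul res X Y' \<phi> f1 = f2"
    proof
      fix z
      have "clo mul res X Y' \<phi> f1 z \<le> clo mul res X Y' \<phi> f2 z"
        by (rule clo_mono[OF c], rule f12)
      moreover have "clo mul res X Y' \<phi> (ext0 X' \<mu>') z \<le> clo mul res X Y' \<phi> f1 z"
        by (rule clo_mono[OF c], rule e1)
      ultimately show "clo mul res X Y' \<phi> f1 z = f2 z" using cf2
        unfolding f2_def F2_def by (metis antisym)
    qed
    show ?thesis using r1 r2 s1 cf1 cf2
      unfolding f1_def[symmetric] f2_def[symmetric] S2_def by simp
  qed
  show ?thesis using main by simp
qed

end
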